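(* Let $m, r$ be positive integers with $r$ even and $m \geq 4$. Then the complete graph $K_4$ is (isomorphic to) a subgraph of $G(\mathbb{Z}^m, \sqrt{r})$.
   Context: For $X \subseteq \mathbb{R}^m$ and $d>0$, $G(X,d)$ denotes the Euclidean distance graph with vertex set $X$ in which two vertices are adjacent if and only if their Euclidean distance is exactly $d$. *)

theory Defs
  imports "HOL-Analysis.Analysis"
begin

text \<open>The integer lattice Z^m inside R^m, where R^m is modelled as real^'n with m = CARD('n).\<close>
definition int_lattice :: "(real^'n) set" where
  "int_lattice = {x. \<forall>i. x $ i \<in> \<int>}"

definition dist_graph_adj :: "(real^'n) set \<Rightarrow> real \<Rightarrow> real^'n \<Rightarrow> real^'n \<Rightarrow> bool" where
  "dist_graph_adj X d x y \<longleftrightarrow> x \<in> X \<and> y \<in> X \<and> dist x y = d"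

definition contains_complete_subgraph :: "nat \<Rightarrow> (real^'n) set \<Rightarrow> real \<Rightarrow> bool" where
  "contains_complete_subgraph k X d \<longleftrightarrow>
     (\<exists>f :: nat \<Rightarrow> real^'n. inj_on f {..<k} \<and> (\<forall>i<k. f i \<in> X) \<and>
        (\<forall>i<k. \<forall>j<k. i \<noteq> j \<longrightarrow> dist_graph_adj X d (f i) (f j)))"

end

theory Submission
  imports Defs "HOL-Computational_Algebra.Primes"
begin


definition sos4 :: "int \<Rightarrow> bool" where
  "sos4 n \<longleftrightarrow> (\<exists>a b c d. n = a^2+b^2+c^2+d^2)"

lemma sos4_mult: assumes "sos4 x" "sos4 y" shows "sos4 (x*y)"
proof -
  obtain a1 a2 a3 a4 where a: "x = a1^2+a2^2+a3^2+a4^2" using assms(1) unfolding sos4_def by blast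
  obtain b1 b2 b3 b4 where b: "y = b1^2+b2^2+b3^2+b4^2" using assms(2) unfolding sos4_def by blast
  have "x*y = (a1*b1+a2*b2+a3*b3+a4*b4)^2 + (a1*b2-a2*b1+a3*b4-a4*b3)^2
     + (a1*b3-a2*b4-a3*b1+a4*b2)^2 + (a1*b4+a2*b3-a3*b2-a4*b1)^2"
    unfolding a b by algebra
  then show ?thesis unfolding sos4_def by blast
qed

lemma centered:
  fixes x m :: int assumes "m > 0"
  shows "\<exists>y k. x = y + m*k \<and> 4*y^2 \<le> m^2"
proof -
  define c where "c = m div 2"
  define y where "y = (x + c) mod m - c"
  define k where "k = (x + c) div m"
  have e: "x = y + m*k" unfolding y_def k_def by (metis add_diff_cancel_right' diff_add_eq minus_div_mult_eq_mod mult.commute)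
  have "0 \<le> (x+c) mod m" "(x+c) mod m < m" using assms by auto
  hence "-c \<le> y" "y \<le> m - 1 - c" unfolding y_def by auto
  moreover have "m - 1 - c \<le> c" "0 \<le> c" "2*c \<le> m" unfolding c_def using assms by auto
  ultimately have "\<bar>2*y\<bar> \<le> m" by auto
  hence "\<bar>2*y\<bar>^2 \<le> m^2" by (intro power_mono) auto
  hence "(2*y)^2 \<le> m^2" by simp
  hence "4*y^2 \<le> m^2" by (simp add: power_mult_distrib)
  thus ?thesis using e by blast
qed

lemma descent_step:
  fixes m p :: int
  assumes p: "prime p" and m1: "1 < m" and mp: "m < p" and s: "sos4 (m*p)"
  shows "\<exists>r. 0 < r \<and> r < m \<and> sos4 (r*p)"
proof -
  have m0: "m > 0" using m1 by simp
  obtain x1 x2 x3 x4 where x: "m*p = x1^2+x2^2+x3^2+x4^2" using s unfolding sos4_def by blast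
  obtain y1 k1 where 1: "x1 = y1 + m*k1" "4*y1^2 \<le> m^2" using centered[where x=x1, OF m0] by blast
  obtain y2 k2 where 2: "x2 = y2 + m*k2" "4*y2^2 \<le> m^2" using centered[where x=x2, OF m0] by blast
  obtain y3 k3 where 3: "x3 = y3 + m*k3" "4*y3^2 \<le> m^2" using centered[where x=x3, OF m0] by blast
  obtain y4 k4 where 4: "x4 = y4 + m*k4" "4*y4^2 \<le> m^2" using centered[where x=x4, OF m0] by blast
  define r where "r = p - 2*(x1*k1+x2*k2+x3*k3+x4*k4) + m*(k1^2+k2^2+k3^2+k4^2)"
  have yr: "y1^2+y2^2+y3^2+y4^2 = m*r"
  proof -
    have "m*r = m*p - 2*m*(x1*k1+x2*k2+x3*k3+x4*k4) + m*m*(k1^2+k2^2+k3^2+k4^2)"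
      unfolding r_def by algebra
    also have "\<dots> = y1^2+y2^2+y3^2+y4^2" unfolding x 1(1) 2(1) 3(1) 4(1) by algebra
    finally show ?thesis by simp
  qed
  have notdvd: "\<not> m dvd p"
  proof
    assume "m dvd p"
    then have "m = 1 \<or> m = p" using p m0 unfolding prime_int_iff by auto
    thus False using m1 mp by auto
  qed
  have "4*(m*r) \<le> 4*(m*m)" using 1 2 3 4 yr unfolding power2_eq_square by linarith
  hence "m*r \<le> m*m" by linarith
  hence rm: "r \<le> m" using mult_le_cancel_left_pos[OF m0] by blast
  have r0: "r \<ge> 0"
  proof -
    have "0 \<le> y1^2+y2^2+y3^2+y4^2" by simp
    hence "0 \<le> m*r" using yr by linarith
    thus ?thesis using m0 zero_le_mult_iff by force
  qed
  have "r \<noteq> 0"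
  proof
    assume "r = 0"
    hence s0: "y1^2+y2^2+y3^2+y4^2 = 0" using yr by simp
    have "0 \<le> y1^2" "0 \<le> y2^2" "0 \<le> y3^2" "0 \<le> y4^2" by simp_all
    hence "y1^2 = 0" "y2^2 = 0" "y3^2 = 0" "y4^2 = 0" using s0 by linarith+
    hence "y1 = 0 \<and> y2 = 0 \<and> y3 = 0 \<and> y4 = 0" by simp
    hence "m*p = m*(m*(k1^2+k2^2+k3^2+k4^2))" unfolding x 1(1) 2(1) 3(1) 4(1) by algebra
    hence "p = m*(k1^2+k2^2+k3^2+k4^2)" using m0 by simp
    thus False using notdvd by simp
  qed
  moreover have "r \<noteq> m"
  proof
    assume "r = m"
    have d: "m dvd 2*y" if "4*y^2 \<le> m^2" "4*y^2 \<ge> m^2" for y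
    proof -
      have "(2*y)^2 = m^2" using that by (simp add: power_mult_distrib)
      hence "\<bar>2*y\<bar> = m" using m0 by (metis abs_of_pos power2_eq_iff_nonneg abs_ge_zero power2_abs)
      thus ?thesis by (metis dvd_abs_iff dvd_refl)
    qed
    have eq: "y1^2+y2^2+y3^2+y4^2 = m^2" using yr `r = m` by (simp add: power2_eq_square)
    have "4*y1^2 \<ge> m^2" "4*y2^2 \<ge> m^2" "4*y3^2 \<ge> m^2" "4*y4^2 \<ge> m^2" using eq 1 2 3 4 by linarith+
    then obtain e1 e2 e3 e4 where e: "2*y1 = m*e1" "2*y2 = m*e2" "2*y3 = m*e3" "2*y4 = m*e4"
      using d 1 2 3 4 by (meson dvdE)
    have "m*p = (y1^2+y2^2+y3^2+y4^2) + m*(2*y1*k1+2*y2*k2+2*y3*k3+2*y4*k4) + m*m*(k1^2+k2^2+k3^2+k4^2)"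
      unfolding x 1(1) 2(1) 3(1) 4(1) by algebra
    also have "\<dots> = m*(m*(1 + e1*k1+e2*k2+e3*k3+e4*k4 + k1^2+k2^2+k3^2+k4^2))"
      unfolding eq e by algebra
    finally have "p = m*(1 + e1*k1+e2*k2+e3*k3+e4*k4 + k1^2+k2^2+k3^2+k4^2)" using m0 by simp
    thus False using notdvd by simp
  qed
  ultimately have "0 < r" "r < m" using r0 rm by auto
  moreover have "sos4 (r*p)"
  proof -
    define w1 where "w1 = p - (x1*k1+x2*k2+x3*k3+x4*k4)"
    define w2 where "w2 = -x1*k2+x2*k1-x3*k4+x4*k3"
    define w3 where "w3 = -x1*k3+x2*k4+x3*k1-x4*k2"
    define w4 where "w4 = -x1*k4-x2*k3+x3*k2+x4*k1"
    have y1e: "y1 = x1 - m*k1" "y2 = x2 - m*k2" "y3 = x3 - m*k3" "y4 = x4 - m*k4"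
      using 1(1) 2(1) 3(1) 4(1) by simp_all
    have "x1*y1+x2*y2+x3*y3+x4*y4 = (x1^2+x2^2+x3^2+x4^2) - m*(x1*k1+x2*k2+x3*k3+x4*k4)"
      unfolding y1e by algebra
    also have "\<dots> = m*w1" unfolding x[symmetric] w1_def by algebra
    finally have z1: "x1*y1+x2*y2+x3*y3+x4*y4 = m*w1" .
    have z2: "x1*y2-x2*y1+x3*y4-x4*y3 = m*w2" unfolding w2_def 1(1) 2(1) 3(1) 4(1) by algebra
    have z3: "x1*y3-x2*y4-x3*y1+x4*y2 = m*w3" unfolding w3_def 1(1) 2(1) 3(1) 4(1) by algebra
    have z4: "x1*y4+x2*y3-x3*y2-x4*y1 = m*w4" unfolding w4_def 1(1) 2(1) 3(1) 4(1) by algebra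
    have "(m*p)*(m*r) = (x1*y1+x2*y2+x3*y3+x4*y4)^2 + (x1*y2-x2*y1+x3*y4-x4*y3)^2
     + (x1*y3-x2*y4-x3*y1+x4*y2)^2 + (x1*y4+x2*y3-x3*y2-x4*y1)^2"
      unfolding x yr[symmetric] by algebra
    also have "\<dots> = (m*m)*(w1^2+w2^2+w3^2+w4^2)" unfolding z1 z2 z3 z4 by algebra
    finally have "(m*m)*(r*p) = (m*m)*(w1^2+w2^2+w3^2+w4^2)" by (simp add: algebra_simps)
    hence "r*p = w1^2+w2^2+w3^2+w4^2" using m0 by simp
    thus ?thesis unfolding sos4_def by blast
  qed
  ultimately show ?thesis by blast
qed

lemma descent:
  fixes p :: int and m :: nat
  assumes p: "prime p"
  shows "0 < m \<Longrightarrow> int m < p \<Longrightarrow> sos4 (int m * p) \<Longrightarrow> sos4 p"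
proof (induction m rule: less_induct)
  case (less m)
  show ?case
  proof (cases "m = 1")
    case True thus ?thesis using less.prems(3) by simp
  next
    case False
    then obtain r where r: "0 < r" "r < int m" "sos4 (r*p)" using descent_step[OF p, of "int m"] less.prems by auto
    have "nat r < m" "0 < nat r" "sos4 (int (nat r) * p)" using r by auto
    thus ?thesis using less.IH[of "nat r"] r less.prems by auto
  qed
qed


lemma small_dvd: fixes p a :: int assumes "p dvd a" "\<bar>a\<bar> < p" shows "a = 0"
proof (rule ccontr)
  assume "a \<noteq> 0"
  hence "\<bar>p\<bar> \<le> \<bar>a\<bar>" using dvd_imp_le_int assms(1) by blast
  thus False using assms(2) by linarith
qed

lemma sq_inj:
  fixes p :: int assumes p: "prime p"
  shows "inj_on (\<lambda>x. x^2 mod p) {0..(p-1) div 2}"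
proof (rule inj_onI)
  fix x x' assume x: "x \<in> {0..(p-1) div 2}" and x': "x' \<in> {0..(p-1) div 2}"
    and e: "x^2 mod p = x'^2 mod p"
  have p2: "p \<ge> 2" using prime_ge_2_int[OF p] .
  have "p dvd x^2 - x'^2" using e by (simp add: mod_eq_dvd_iff)
  moreover have "x^2 - x'^2 = (x - x')*(x + x')" by algebra
  ultimately have "p dvd (x - x') \<or> p dvd (x + x')" using prime_dvd_multD[OF p] by auto
  moreover have "\<bar>x - x'\<bar> < p" "\<bar>x + x'\<bar> < p" using x x' p2 by auto
  ultimately have "x - x' = 0 \<or> x + x' = 0" using small_dvd by blast
  thus "x = x'" using x x' by auto
qed

lemma neg_sq_inj:
  fixes p :: int assumes p: "prime p"
  shows "inj_on (\<lambda>y. (-1-y^2) mod p) {0..(p-1) div 2}"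
proof (rule inj_onI)
  fix x x' assume x: "x \<in> {0..(p-1) div 2}" and x': "x' \<in> {0..(p-1) div 2}"
    and e: "(-1-x^2) mod p = (-1-x'^2) mod p"
  have "p dvd (-1-x^2) - (-1-x'^2)" using e by (simp add: mod_eq_dvd_iff)
  hence "p dvd -(x^2 - x'^2)" by (simp add: algebra_simps)
  hence "p dvd (x^2 - x'^2)" by (simp only: dvd_minus_iff)
  hence "x^2 mod p = x'^2 mod p" by (simp add: mod_eq_dvd_iff)
  thus "x = x'" using inj_onD[OF sq_inj[OF p]] x x' by blast
qed

lemma exists_xy:
  fixes p :: int assumes p: "prime p" and odd: "odd p"
  shows "\<exists>x y. p dvd x^2 + y^2 + 1"
proof (rule ccontr)
  assume nex: "\<not> ?thesis"
  define h where "h = (p-1) div 2"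
  define A where "A = (\<lambda>x. x^2 mod p) ` {0..h}"
  define B where "B = (\<lambda>y. (-1-y^2) mod p) ` {0..h}"
  have p2: "p \<ge> 2" using prime_ge_2_int[OF p] .
  have cA: "card A = nat (h+1)" unfolding A_def h_def using card_image[OF sq_inj[OF p]] by simp
  have cB: "card B = nat (h+1)" unfolding B_def h_def using card_image[OF neg_sq_inj[OF p]] by simp
  have disj: "A \<inter> B = {}"
  proof (rule ccontr)
    assume "A \<inter> B \<noteq> {}"
    then obtain x y where "x^2 mod p = (-1-y^2) mod p" unfolding A_def B_def by auto
    hence "p dvd x^2 - (-1-y^2)" by (simp add: mod_eq_dvd_iff)
    hence "p dvd x^2 + y^2 + 1" by (simp add: algebra_simps)
    thus False using nex by blast
  qed
  have sub: "A \<union> B \<subseteq> {0..<p}" unfolding A_def B_def using p2 by auto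
  have h0: "0 \<le> h" using p2 h_def by simp
  have "card (A \<union> B) = card A + card B" using disj by (simp add: A_def B_def card_Un_disjoint)
  hence c1: "int (card (A \<union> B)) = 2*h+2" using cA cB h0 by simp
  have "card (A \<union> B) \<le> card {0..<p}" using card_mono[OF _ sub] by simp
  hence "int (card (A \<union> B)) \<le> p" using p2 by simp
  moreover have "2*h+2 > p" unfolding h_def using odd by presburger
  ultimately show False using c1 by simp
qed

lemma prime_sos4:
  fixes p :: int assumes p: "prime p"
  shows "sos4 p"
proof (cases "p = 2")
  case True
  have "p = 1^2+1^2+0^2+0^2" using True by simp
  thus ?thesis unfolding sos4_def by blast
next
  case False
  have p2: "p \<ge> 2" using prime_ge_2_int[OF p] .
  hence "odd p" using prime_odd_int[OF p] False by simp
  then obtain x y where d: "p dvd x^2 + y^2 + 1" using exists_xy[OF p] by blast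
  have p0: "p > 0" using p2 by simp
  obtain x0 k where xk: "x = x0 + p*k" "4*x0^2 \<le> p^2" using centered[where x=x, OF p0] by blast
  obtain y0 l where yl: "y = y0 + p*l" "4*y0^2 \<le> p^2" using centered[where x=y, OF p0] by blast
  have "x^2 + y^2 + 1 = (x0^2 + y0^2 + 1) + p*(2*x0*k + p*k^2 + 2*y0*l + p*l^2)"
    unfolding xk(1) yl(1) by algebra
  hence e: "x0^2 + y0^2 + 1 = (x^2 + y^2 + 1) - p*(2*x0*k + p*k^2 + 2*y0*l + p*l^2)" by simp
  have dd: "p dvd (x^2 + y^2 + 1) - p*(2*x0*k + p*k^2 + 2*y0*l + p*l^2)"
    using d by (intro dvd_diff) simp_all
  have "p dvd x0^2 + y0^2 + 1" unfolding e by (rule dd)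
  then obtain m where m: "x0^2 + y0^2 + 1 = p*m" by (elim dvdE)
  have "0 < x0^2 + y0^2 + 1" by (simp add: add_nonneg_pos)
  hence m0: "m > 0" using m p0 by (simp add: zero_less_mult_iff)
  have "4*(p*m) \<le> 2*p^2 + 4" using m xk(2) yl(2) by linarith
  moreover have "2*2 \<le> p*p" using p2 by (intro mult_mono) auto
  ultimately have "4*(p*m) < 4*(p*p)" unfolding power2_eq_square by linarith
  hence "m < p" using p0 by simp
  moreover have "sos4 (int (nat m) * p)"
  proof -
    have "int (nat m) * p = x0^2 + y0^2 + 1^2 + 0^2" using m m0 by simp
    thus ?thesis unfolding sos4_def by blast
  qed
  ultimately show ?thesis using descent[OF p, of "nat m"] m0 by simp
qed

lemma nat_sos4: "sos4 (int n)"
proof (induction n rule: prime_divisors_induct)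
  case zero
  have "int 0 = 0^2+0^2+0^2+0^2" by simp
  thus ?case unfolding sos4_def by blast
next
  case (unit x)
  hence "int x = 1^2+0^2+0^2+0^2" by simp
  thus ?case unfolding sos4_def by blast
next
  case (factor p x)
  have "prime (int p)" using factor(1) by simp
  hence "sos4 (int p)" by (rule prime_sos4)
  thus ?case using sos4_mult[OF _ factor(2)] by simp
qed


definition emb :: "(nat \<Rightarrow> 'n) \<Rightarrow> (nat \<Rightarrow> int) \<Rightarrow> real^'n" where
  "emb h v = (\<chi> j. if j \<in> h ` {..<4} then real_of_int (v (the_inv_into {..<4} h j)) else 0)"

lemma emb_dist:
  assumes h: "inj_on h {..<4::nat}"
  shows "dist (emb h v) (emb h w) = sqrt (\<Sum>i<4. (real_of_int (v i - w i))^2)"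
proof -
  have "dist (emb h v) (emb h w) = sqrt (\<Sum>j\<in>UNIV. (emb h v $ j - emb h w $ j)^2)"
    unfolding dist_vec_def L2_set_def dist_real_def by simp
  also have "(\<Sum>j\<in>UNIV. (emb h v $ j - emb h w $ j)^2) = (\<Sum>j\<in>h ` {..<4}. (emb h v $ j - emb h w $ j)^2)"
    by (rule sum.mono_neutral_right) (auto simp: emb_def)
  also have "\<dots> = (\<Sum>i<4. (emb h v $ h i - emb h w $ h i)^2)"
    using sum.reindex[OF h] by simp
  also have "\<dots> = (\<Sum>i<4. (real_of_int (v i - w i))^2)"
    by (rule sum.cong) (auto simp: emb_def the_inv_into_f_f[OF h])
  finally show ?thesis .
qed

lemma card_emb:
  assumes "CARD('n::finite) \<ge> 4"
  obtains h :: "nat \<Rightarrow> 'n::finite" where "inj_on h {..<4}"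
proof -
  obtain g :: "nat \<Rightarrow> 'n" where g: "bij_betw g {0..<CARD('n)} UNIV"
    using ex_bij_betw_nat_finite[of "UNIV :: 'n set"] by auto
  have "inj_on g {0..<CARD('n)}" using g bij_betw_def by blast
  hence "inj_on g {..<4}" by (rule inj_on_subset) (use assms in auto)
  thus ?thesis using that by blast
qed

definition pts :: "int \<Rightarrow> int \<Rightarrow> int \<Rightarrow> int \<Rightarrow> nat \<Rightarrow> nat \<Rightarrow> int" where
  "pts a b c d i k = [[0,0,0,0],[a-b, a+b, c+d, d-c],[a-c, b-d, a+c, b+d],[a-d, b+c, c-b, a+d]] ! i ! k"

lemma sum4: "(\<Sum>k<(4::nat). f k) = f 0 + f 1 + f 2 + (f 3 :: real)"
  by (simp add: eval_nat_numeral)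

lemma pts_dist:
  assumes "i < 4" "j < 4" "i \<noteq> j"
  shows "(\<Sum>k<4. (real_of_int (pts a b c d i k - pts a b c d j k))^2) = 2 * real_of_int (a^2+b^2+c^2+d^2)"
proof -
  have "i = 0 \<or> i = 1 \<or> i = 2 \<or> i = 3" "j = 0 \<or> j = 1 \<or> j = 2 \<or> j = 3" using assms by auto
  with assms(3) show ?thesis unfolding sum4 pts_def
    by (auto simp: power2_eq_square algebra_simps)
qed

theorem lemma3:
  fixes r :: nat
  assumes "CARD('n::finite) \<ge> 4"
    and "r > 0" and "even r"
  shows "contains_complete_subgraph 4 (int_lattice :: (real^'n) set) (sqrt (real r))"
proof -
  obtain h :: "nat \<Rightarrow> 'n" where h: "inj_on h {..<4}" using card_emb[OF assms(1)] by blast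
  obtain s :: nat where s: "r = 2 * s" using assms(3) by blast
  obtain a b c d where abcd: "int s = a^2+b^2+c^2+d^2" using nat_sos4[of s] unfolding sos4_def by blast
  define f where "f i = emb h (pts a b c d i)" for i
  have lat: "f i \<in> int_lattice" for i
    unfolding int_lattice_def f_def emb_def by auto
  have d: "dist (f i) (f j) = sqrt (real r)" if "i < 4" "j < 4" "i \<noteq> j" for i j
  proof -
    have "dist (f i) (f j) = sqrt (2 * real_of_int (a^2+b^2+c^2+d^2))"
      unfolding f_def emb_dist[OF h] pts_dist[OF that] ..
    also have "\<dots> = sqrt (real r)" using abcd s by (metis of_int_of_nat_eq of_nat_mult of_nat_numeral)
    finally show ?thesis .
  qed
  have pos: "sqrt (real r) > 0" using assms(2) by simp
  have inj: "inj_on f {..<4}"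
  proof (rule inj_onI)
    fix i j assume "i \<in> {..<4::nat}" "j \<in> {..<4::nat}" "f i = f j"
    thus "i = j" using d pos by fastforce
  qed
  show ?thesis unfolding contains_complete_subgraph_def dist_graph_adj_def
    using inj lat d by blast
qed
end
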